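(* Consider the system $\dot v_1=-v_1^2+v_2$, $\dot v_2=-v_1v_2$ with initial data $(v_1(0),v_2(0))\in\mathbb{R}^2$. Its solution blows up in finite positive time if and only if one of the following holds: $v_2(0)<0$; or $v_2(0)=0$ and $v_1(0)<0$; or $v_2(0)>0$, $v_1(0)<0$ and $v_1(0)^2\ge 2v_2(0)$.
   Context: This is the extended system $\dot{\mathbf v}=-v_1\mathbf v+Q\mathbf v$ with $Q=\begin{pmatrix}0&1\\0&0\end{pmatrix}$, governing $(v_1,v_2)=(V_x,E_x)$ along characteristics for the pressureless Euler–Poisson system $V_t+VV_x=kE-\gamma V$, $E_t+VE_x=NV$ with $k=1$, $N=0$, $\gamma=0$. (The paper's text writes "$v_2(0)=0$, $v_1(0)>0$" in the second case, which is a misprint for $v_1(0)<0$.) *)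

theory Defs
  imports Complex_Main
begin

definition is_solution_on :: "real \<Rightarrow> real \<Rightarrow> real \<Rightarrow> (real \<Rightarrow> real) \<Rightarrow> (real \<Rightarrow> real) \<Rightarrow> bool" where
  "is_solution_on a b T v1 v2 \<longleftrightarrow>
     v1 0 = a \<and> v2 0 = b \<and>
     (\<forall>t\<in>{0..<T}.
        (v1 has_real_derivative (v2 t - (v1 t)^2)) (at t within {0..<T}) \<and>
        (v2 has_real_derivative (- (v1 t * v2 t))) (at t within {0..<T}))"

text \<open>The solution with initial data (a,b) blows up in finite positive time: there is a
  finite T > 0 and a solution on [0,T) whose size tends to infinity as t tends to T from the left.
  (By local Lipschitz uniqueness this is exactly: the maximal forward existence time is finite.)\<close>
definition blows_up_in_finite_time :: "real \<Rightarrow> real \<Rightarrow> bool" where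
  "blows_up_in_finite_time a b \<longleftrightarrow>
     (\<exists>T>0. \<exists>v1 v2. is_solution_on a b T v1 v2 \<and>
        filterlim (\<lambda>t. \<bar>v1 t\<bar> + \<bar>v2 t\<bar>) at_top (at_left T))"

end

theory Submission
  imports Defs
begin

lemma gronwall0:
  fixes E E' :: "real \<Rightarrow> real" and M t1 :: real
  assumes t1: "0 \<le> t1"
    and nn: "\<And>t. t \<in> {0..t1} \<Longrightarrow> E t \<ge> 0"
    and E0: "E 0 = 0"
    and d: "\<And>t. t \<in> {0..t1} \<Longrightarrow> (E has_real_derivative E' t) (at t within {0..t1})"
    and le: "\<And>t. t \<in> {0..t1} \<Longrightarrow> E' t \<le> M * E t"
  shows "E t1 = 0"
proof -
  define F where "F t = E t * exp (- M * t)" for t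
  have dF: "(F has_real_derivative (E' t - M * E t) * exp (- M * t)) (at t within {0..t1})"
    if "t \<in> {0..t1}" for t
  proof -
    have "(F has_real_derivative E' t * exp (- M * t) + E t * (exp (- M * t) * (- M * 1))) (at t within {0..t1})"
      unfolding F_def using d[OF that] by (intro derivative_eq_intros) auto
    then show ?thesis by (simp add: algebra_simps)
  qed
  have cF: "continuous_on {0..t1} F"
    using dF DERIV_continuous continuous_on_eq_continuous_within by blast
  have "F t1 \<le> F 0"
  proof (rule DERIV_nonpos_imp_decreasing_open[OF t1 _ cF])
    fix x assume x: "0 < x" "x < t1"
    have "at x within {0..t1} = at x"
      using x by (intro at_within_Icc_at) auto
    with dF[of x] x have "(F has_real_derivative (E' x - M * E x) * exp (- M * x)) (at x)" by auto
    moreover have "(E' x - M * E x) * exp (- M * x) \<le> 0"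
      using le[of x] x by (intro mult_nonpos_nonneg) auto
    ultimately show "\<exists>y. (F has_real_derivative y) (at x) \<and> y \<le> 0" by blast
  qed
  then have "F t1 \<le> 0" using E0 by (simp add: F_def)
  moreover have "F t1 \<ge> 0" using nn[of t1] t1 by (simp add: F_def)
  ultimately have "E t1 * exp (- M * t1) = 0" by (simp add: F_def)
  then show ?thesis by simp
qed

lemma ineq_aux:
  fixes p q w u B1 B2 :: real
  assumes "\<bar>w\<bar> \<le> B2" "\<bar>u\<bar> \<le> B1"
  shows "2 * p * (- (w * q)) + 2 * q * (p - u * q) \<le> (1 + B2 + 2 * B1) * (p^2 + q^2)"
proof -
  have e: "2 * p * (- (w * q)) + 2 * q * (p - u * q) = (1 - w) * (2 * p * q) + (- u) * (2 * q^2)"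
    by (simp add: algebra_simps power2_eq_square)
  have a1: "\<bar>2 * p * q\<bar> \<le> p^2 + q^2"
    using sum_squares_bound[of p q] sum_squares_bound[of p "-q"]
    by (simp add: abs_if algebra_simps)
  have "(1 - w) * (2 * p * q) \<le> \<bar>1 - w\<bar> * \<bar>2 * p * q\<bar>"
    by (metis abs_ge_self abs_mult)
  also have "\<dots> \<le> (1 + B2) * (p^2 + q^2)"
    using a1 assms(1) by (intro mult_mono) auto
  finally have h1: "(1 - w) * (2 * p * q) \<le> (1 + B2) * (p^2 + q^2)" .
  have "(- u) * (2 * q^2) \<le> B1 * (2 * q^2)"
    using assms(2) by (intro mult_right_mono) auto
  also have "\<dots> \<le> (2 * B1) * (p^2 + q^2)"
    using assms(2) by (simp add: algebra_simps mult_left_mono)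
  finally have h2: "(- u) * (2 * q^2) \<le> (2 * B1) * (p^2 + q^2)" .
  have "(1 + B2) * (p^2 + q^2) + (2 * B1) * (p^2 + q^2) = (1 + B2 + 2 * B1) * (p^2 + q^2)" by (simp add: algebra_simps)
  then show ?thesis using h1 h2 e by linarith
qed

lemma bound_on:
  fixes f :: "real \<Rightarrow> real"
  assumes "continuous_on {0..t} f" "0 \<le> t"
  shows "\<exists>B. \<forall>s\<in>{0..t}. \<bar>f s\<bar> \<le> B"
proof -
  have "continuous_on {0..t} (\<lambda>s. \<bar>f s\<bar>)" using assms(1) by (intro continuous_intros)
  from continuous_attains_sup[OF compact_Icc _ this] assms(2)
  obtain x where "\<forall>s\<in>{0..t}. \<bar>f s\<bar> \<le> \<bar>f x\<bar>" by auto
  then show ?thesis by blast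
qed

lemma uniq:
  assumes sol: "is_solution_on a b T v1 v2" and t: "t \<in> {0..<T}"
  shows "v2 t * (1 + a*t + b*t^2/2) = b \<and> v1 t * (1 + a*t + b*t^2/2) = a + b*t"
proof -
  define G where "G s = 1 + a*s + b*s^2/2" for s :: real
  define P where "P s = v2 s * G s - b" for s
  define Q where "Q s = v1 s * G s - (a + b*s)" for s
  define E where "E s = (P s)^2 + (Q s)^2" for s
  define E' where "E' s = 2 * P s * (- (v2 s * Q s)) + 2 * Q s * (P s - v1 s * Q s)" for s
  have t0: "0 \<le> t" and tT: "t < T" using t by auto
  have sub: "{0..t} \<subseteq> {0..<T}" using tT by auto
  have d1: "(v1 has_real_derivative (v2 s - (v1 s)^2)) (at s within {0..t})"
   and d2: "(v2 has_real_derivative (- (v1 s * v2 s))) (at s within {0..t})"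
    if "s \<in> {0..t}" for s
  proof -
    have "s \<in> {0..<T}" using sub that by auto
    then have "(v1 has_real_derivative (v2 s - (v1 s)^2)) (at s within {0..<T})"
      "(v2 has_real_derivative (- (v1 s * v2 s))) (at s within {0..<T})"
      using sol unfolding is_solution_on_def by auto
    then show "(v1 has_real_derivative (v2 s - (v1 s)^2)) (at s within {0..t})"
      "(v2 has_real_derivative (- (v1 s * v2 s))) (at s within {0..t})"
      using DERIV_subset[OF _ sub] by blast+
  qed
  have c1: "continuous_on {0..t} v1" and c2: "continuous_on {0..t} v2"
    using d1 d2 DERIV_continuous continuous_on_eq_continuous_within by blast+
  obtain B1 where B1: "\<And>s. s \<in> {0..t} \<Longrightarrow> \<bar>v1 s\<bar> \<le> B1" using bound_on[OF c1 t0] by blast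
  obtain B2 where B2: "\<And>s. s \<in> {0..t} \<Longrightarrow> \<bar>v2 s\<bar> \<le> B2" using bound_on[OF c2 t0] by blast
  have dE: "(E has_real_derivative E' s) (at s within {0..t})" if s: "s \<in> {0..t}" for s
  proof -
    have dG: "(G has_real_derivative (a + b*s)) (at s within {0..t})"
      unfolding G_def by (auto intro!: derivative_eq_intros simp: power2_eq_square)
    have dP: "(P has_real_derivative (- (v2 s * Q s))) (at s within {0..t})"
    proof -
      have "(P has_real_derivative (- (v1 s * v2 s)) * G s + v2 s * (a + b*s)) (at s within {0..t})"
        unfolding P_def using d2[OF s] dG by (auto intro!: derivative_eq_intros)
      then show ?thesis by (simp add: Q_def algebra_simps)
    qed
    have dQ: "(Q has_real_derivative (P s - v1 s * Q s)) (at s within {0..t})"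
    proof -
      have "(Q has_real_derivative (v2 s - (v1 s)^2) * G s + v1 s * (a + b*s) - b) (at s within {0..t})"
        unfolding Q_def using d1[OF s] dG by (auto intro!: derivative_eq_intros)
      then show ?thesis by (simp add: Q_def P_def algebra_simps power2_eq_square)
    qed
    have "(E has_real_derivative 2 * P s * (- (v2 s * Q s)) + 2 * Q s * (P s - v1 s * Q s)) (at s within {0..t})"
      unfolding E_def using dP dQ by (auto intro!: derivative_eq_intros simp: algebra_simps)
    then show ?thesis by (simp add: E'_def)
  qed
  have "E t = 0"
  proof (rule gronwall0[OF t0, where E' = E' and M = "1 + B2 + 2 * B1"])
    show "\<And>s. s \<in> {0..t} \<Longrightarrow> 0 \<le> E s" by (simp add: E_def)
    show "E 0 = 0" using sol by (simp add: E_def P_def Q_def G_def is_solution_on_def)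
    show "\<And>s. s \<in> {0..t} \<Longrightarrow> (E has_real_derivative E' s) (at s within {0..t})" by (rule dE)
    show "\<And>s. s \<in> {0..t} \<Longrightarrow> E' s \<le> (1 + B2 + 2 * B1) * E s"
      unfolding E'_def E_def by (rule ineq_aux[OF B2 B1])
  qed
  then have "P t = 0" "Q t = 0" unfolding E_def by (auto simp: add_nonneg_eq_0_iff)
  then show ?thesis by (simp add: P_def Q_def G_def)
qed

lemma G_pos:
  fixes a b t :: real
  assumes nc: "\<not> (b < 0 \<or> (b = 0 \<and> a < 0) \<or> (b > 0 \<and> a < 0 \<and> a^2 \<ge> 2 * b))"
    and t: "0 \<le> t"
  shows "1 + a*t + b*t^2/2 > 0"
proof -
  consider "b = 0" "a \<ge> 0" | "b > 0" "a \<ge> 0" | "b > 0" "a^2 < 2 * b" using nc by force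
  then show ?thesis
  proof cases
    case 1 then show ?thesis using t by (simp add: add_pos_nonneg)
  next
    case 2 then show ?thesis using t by (simp add: add_pos_nonneg)
  next
    case 3
    have "2 * b * (1 + a*t + b*t^2/2) = (b*t + a)^2 + (2*b - a^2)"
      by (simp add: algebra_simps power2_eq_square)
    moreover have "(b*t + a)^2 + (2*b - a^2) > 0" using 3 by (simp add: add_nonneg_pos)
    ultimately have "2 * b * (1 + a*t + b*t^2/2) > 0" by simp
    then show ?thesis using 3 by (simp add: zero_less_mult_iff)
  qed
qed

lemma necessity:
  assumes bl: "blows_up_in_finite_time a b"
  shows "b < 0 \<or> (b = 0 \<and> a < 0) \<or> (b > 0 \<and> a < 0 \<and> a^2 \<ge> 2 * b)"
proof (rule ccontr)
  assume nc: "\<not> ?thesis"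
  from bl obtain T v1 v2 where T: "T > 0" and sol: "is_solution_on a b T v1 v2"
    and lim: "filterlim (\<lambda>t. \<bar>v1 t\<bar> + \<bar>v2 t\<bar>) at_top (at_left T)"
    unfolding blows_up_in_finite_time_def by blast
  define G where "G s = 1 + a*s + b*s^2/2" for s :: real
  define f where "f s = \<bar>(a + b*s) / G s\<bar> + \<bar>b / G s\<bar>" for s
  have Gp: "G s > 0" if "0 \<le> s" for s using G_pos[OF nc that] by (simp add: G_def)
  have ev: "eventually (\<lambda>s. \<bar>v1 s\<bar> + \<bar>v2 s\<bar> = f s) (at_left T)"
    using eventually_at_left_real[OF T]
  proof (rule eventually_mono)
    fix s assume s: "s \<in> {0<..<T}"
    then have "s \<in> {0..<T}" by auto
    from uniq[OF sol this] have "v2 s * G s = b" "v1 s * G s = a + b*s" by (auto simp: G_def)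
    moreover have "G s > 0" using Gp s by auto
    ultimately have "v2 s = b / G s" "v1 s = (a + b*s) / G s" by (auto simp: field_simps)
    then show "\<bar>v1 s\<bar> + \<bar>v2 s\<bar> = f s" by (simp add: f_def)
  qed
  have "filterlim f at_top (at_left T)"
    using filterlim_cong[OF refl refl ev] lim by simp
  moreover have "(f \<longlongrightarrow> f T) (at_left T)"
  proof -
    have "G T \<noteq> 0" using Gp[of T] T by simp
    then have "isCont f T" unfolding f_def G_def by (intro continuous_intros) (auto simp: G_def)
    then show ?thesis by (simp add: isCont_def filterlim_at_split)
  qed
  ultimately show False
    using not_tendsto_and_filterlim_at_infinity[of "at_left T" f "f T"]
      filterlim_at_top_imp_at_infinity by auto
qed

lemma sufficiency:
  assumes c: "b < 0 \<or> (b = 0 \<and> a < 0) \<or> (b > 0 \<and> a < 0 \<and> a^2 \<ge> 2 * b)"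
  shows "blows_up_in_finite_time a b"
proof -
  define s where "s = sqrt (a^2 - 2*b)"
  have disc: "a^2 - 2*b \<ge> 0" using c zero_le_power2[of a] by linarith
  have s2: "s^2 = a^2 - 2*b" using disc unfolding s_def by (rule real_sqrt_pow2)
  have s0: "s \<ge> 0" using disc by (simp add: s_def)
  have sa: "s - a > 0"
  proof -
    consider "b < 0" | "a < 0" using c by auto
    then show ?thesis
    proof cases
      case 1
      have "\<bar>a\<bar>^2 < s^2" using s2 1 by simp
      then have "\<bar>a\<bar> < s" using s0 power_less_imp_less_base by blast
      then show ?thesis by simp
    next
      case 2 then show ?thesis using s0 by simp
    qed
  qed
  define u1 where "u1 = (s - a) / 2"
  define u2 where "u2 = (- a - s) / 2"
  define T where "T = 1 / u1"
  define G where "G t = 1 + a*t + b*t^2/2" for t :: real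
  have u1p: "u1 > 0" using sa by (simp add: u1_def)
  have u21: "u2 \<le> u1" using s0 by (simp add: u1_def u2_def)
  have Tp: "T > 0" using u1p by (simp add: T_def)
  have Gf: "G t = (1 - u1*t) * (1 - u2*t)" for t
  proof -
    have "u1 * u2 = b/2" using s2 by (simp add: u1_def u2_def field_simps power2_eq_square)
    moreover have "u1 + u2 = - a" by (simp add: u1_def u2_def field_simps)
    moreover have "(1 - u1*t) * (1 - u2*t) = 1 - (u1+u2)*t + (u1*u2)*t^2"
      by (simp add: algebra_simps power2_eq_square)
    ultimately show ?thesis by (simp add: G_def)
  qed
  have Gpos: "G t > 0" if t: "0 \<le> t" "t < T" for t
  proof -
    have "u1 * t < 1" using t u1p by (simp add: T_def field_simps)
    moreover have "u2 * t < 1"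
    proof (cases "u2 \<le> 0")
      case True
      have "u2 * t \<le> 0" using True t by (simp add: mult_nonpos_nonneg)
      then show ?thesis by simp
    next
      case False
      have "u2 * t \<le> u1 * t" using u21 t by (simp add: mult_right_mono)
      then show ?thesis using \<open>u1 * t < 1\<close> by simp
    qed
    ultimately show ?thesis by (simp add: Gf)
  qed
  have GT: "G T = 0" using u1p by (simp add: Gf T_def)
  define v1 where "v1 t = (a + b*t) / G t" for t
  define v2 where "v2 t = b / G t" for t
  have sol: "is_solution_on a b T v1 v2"
    unfolding is_solution_on_def
  proof (intro conjI ballI)
    show "v1 0 = a" "v2 0 = b" by (simp_all add: v1_def v2_def G_def)
  next
    fix t assume t: "t \<in> {0..<T}"
    then have Gt: "G t > 0" using Gpos by auto
    have dG: "(G has_real_derivative (a + b*t)) (at t within {0..<T})"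
      unfolding G_def by (auto intro!: derivative_eq_intros simp: power2_eq_square)
    have "(v1 has_real_derivative (b * G t - (a + b*t) * (a + b*t)) / (G t * G t)) (at t within {0..<T})"
      unfolding v1_def using Gt dG by (auto intro!: derivative_eq_intros)
    moreover have "(b * G t - (a + b*t) * (a + b*t)) / (G t * G t) = v2 t - (v1 t)^2"
      using Gt by (simp add: v1_def v2_def field_simps power2_eq_square)
    ultimately show "(v1 has_real_derivative (v2 t - (v1 t)^2)) (at t within {0..<T})" by simp
    have "(v2 has_real_derivative (0 * G t - b * (a + b*t)) / (G t * G t)) (at t within {0..<T})"
      unfolding v2_def using Gt dG by (auto intro!: derivative_eq_intros)
    moreover have "(0 * G t - b * (a + b*t)) / (G t * G t) = - (v1 t * v2 t)"
      using Gt by (simp add: v1_def v2_def field_simps)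
    ultimately show "(v2 has_real_derivative (- (v1 t * v2 t))) (at t within {0..<T})" by simp
  qed
  define cc where "cc = (if b = 0 then \<bar>a\<bar> else \<bar>b\<bar>)"
  have ccp: "cc > 0" using c by (auto simp: cc_def)
  have Glim: "filterlim G (at_right 0) (at_left T)"
    unfolding filterlim_at
  proof
    show "eventually (\<lambda>x. G x \<in> {0<..} \<and> G x \<noteq> 0) (at_left T)"
      using eventually_at_left_real[OF Tp]
    proof (rule eventually_mono)
      fix x :: real assume "x \<in> {0<..<T}"
      then have "G x > 0" using Gpos[of x] by simp
      then show "G x \<in> {0<..} \<and> G x \<noteq> 0" by simp
    qed
    have "isCont G T" unfolding G_def by (intro continuous_intros) auto
    then have "(G \<longlongrightarrow> G T) (at_left T)" by (simp add: isCont_def filterlim_at_split)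
    then show "(G \<longlongrightarrow> 0) (at_left T)" using GT by simp
  qed
  have "filterlim (\<lambda>t. cc * inverse (G t)) at_top (at_left T)"
    by (rule filterlim_tendsto_pos_mult_at_top[OF tendsto_const ccp
          filterlim_compose[OF filterlim_inverse_at_top_right Glim]])
  moreover have "eventually (\<lambda>t. cc * inverse (G t) \<le> \<bar>v1 t\<bar> + \<bar>v2 t\<bar>) (at_left T)"
    using eventually_at_left_real[OF Tp]
  proof (rule eventually_mono)
    fix t assume t: "t \<in> {0<..<T}"
    then have Gt: "G t > 0" using Gpos by auto
    show "cc * inverse (G t) \<le> \<bar>v1 t\<bar> + \<bar>v2 t\<bar>"
    proof (cases "b = 0")
      case True
      then show ?thesis using Gt by (simp add: cc_def v1_def v2_def abs_divide divide_inverse)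
    next
      case False
      then show ?thesis using Gt by (simp add: cc_def v1_def v2_def abs_divide divide_inverse)
    qed
  qed
  ultimately have "filterlim (\<lambda>t. \<bar>v1 t\<bar> + \<bar>v2 t\<bar>) at_top (at_left T)"
    by (rule filterlim_at_top_mono)
  then show ?thesis unfolding blows_up_in_finite_time_def using Tp sol by blast
qed

theorem mainTheorem12:
  fixes a b :: real
  shows "blows_up_in_finite_time a b \<longleftrightarrow>
           (b < 0 \<or> (b = 0 \<and> a < 0) \<or> (b > 0 \<and> a < 0 \<and> a^2 \<ge> 2 * b))"
  using necessity sufficiency by blast

end
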